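(* Let $\mathcal{S}=\{s_1,\dots,s_N\}$ be a finite state space, $\mathcal{A}$ a finite action space, $\gamma\in(0,1)$, and consider the real MDP $\langle\mathcal{S},\mathcal{A},\mathbb{P},R,\gamma\rangle$ and the DT MDP $\langle\mathcal{S},\mathcal{A},\mathbb{P}',R',\gamma\rangle$. Then for all states $s_i,s_j,s_k,s_l\in\mathcal{S}$ and all $n\in\mathbb{N}$, $$d_n(s_i,s_l)\le d_n(s_i,s_j)+d_n(s_k,s_j)+d_n(s_k,s_l).$$
   Context: $\mathbb{P}(\cdot|s,a),\mathbb{P}'(\cdot|s,a)$ are probability distributions on $\mathcal{S}$; $R,R':\mathcal{S}\times\mathcal{A}\to\mathbb{R}$. For distributions $P,Q$ on $\mathcal{S}$ and a cost $d:\mathcal{S}\times\mathcal{S}\to[0,\infty)$ (not required to vanish on the diagonal), $W_1(P,Q;d)=\min_\Lambda\sum_{i,j}\lambda_{i,j}d(s_i,s_j)$ over nonnegative $N\times N$ matrices with row sums $P(s_i)$ and column sums $Q(s_j)$. Define $d_0\equiv0$ and $d_n(s_i,s_j)=\max_a\{|R(s_i,a)-R'(s_j,a)|+\gamma W_1(\mathbb{P}(\cdot|s_i,a),\mathbb{P}'(\cdot|s_j,a);d_{n-1})\}$. In $d_n(x,y)$ the first argument $x$ is a state of the real MDP and the second $y$ a state of the DT MDP, so the inequality concerns real-MDP states $s_i,s_k$ and DT-MDP states $s_j,s_l$. *)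

theory Defs
  imports "HOL-Analysis.Analysis"
begin

definition couplings :: "('s::finite \<Rightarrow> real) \<Rightarrow> ('s \<Rightarrow> real) \<Rightarrow> ('s \<Rightarrow> 's \<Rightarrow> real) set" where
  "couplings p q = {\<Lambda>. (\<forall>x y. 0 \<le> \<Lambda> x y) \<and> (\<forall>x. (\<Sum>y\<in>UNIV. \<Lambda> x y) = p x)
                        \<and> (\<forall>y. (\<Sum>x\<in>UNIV. \<Lambda> x y) = q y)}"

text \<open>Wasserstein-1 distance w.r.t. a cost d (the minimum over couplings; written as Inf,
  which is attained for distributions on a finite set).\<close>
definition W1 :: "('s::finite \<Rightarrow> real) \<Rightarrow> ('s \<Rightarrow> real) \<Rightarrow> ('s \<Rightarrow> 's \<Rightarrow> real) \<Rightarrow> real" where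
  "W1 p q d = Inf ((\<lambda>\<Lambda>. \<Sum>x\<in>UNIV. \<Sum>y\<in>UNIV. \<Lambda> x y * d x y) ` couplings p q)"

text \<open>P, P' are transition kernels (P s a s' = probability of s' from s under a),
  R, R' reward functions, \<gamma> discount. The first argument of d_n is a state of the real MDP,
  the second a state of the DT MDP.\<close>
primrec dn :: "real \<Rightarrow> ('s::finite \<Rightarrow> 'a::finite \<Rightarrow> 's \<Rightarrow> real) \<Rightarrow> ('s \<Rightarrow> 'a \<Rightarrow> 's \<Rightarrow> real)
               \<Rightarrow> ('s \<Rightarrow> 'a \<Rightarrow> real) \<Rightarrow> ('s \<Rightarrow> 'a \<Rightarrow> real) \<Rightarrow> nat \<Rightarrow> 's \<Rightarrow> 's \<Rightarrow> real" where
  "dn \<gamma> P P' R R' 0 = (\<lambda>x y. 0)"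
| "dn \<gamma> P P' R R' (Suc n) = (\<lambda>x y. Max (range (\<lambda>a.
      \<bar>R x a - R' y a\<bar> + \<gamma> * W1 (P x a) (P' y a) (dn \<gamma> P P' R R' n))))"

definition is_distribution :: "('s::finite \<Rightarrow> real) \<Rightarrow> bool" where
  "is_distribution p \<longleftrightarrow> (\<forall>x. 0 \<le> p x) \<and> (\<Sum>x\<in>UNIV. p x) = 1"

end

theory Submission
  imports Defs
begin
lemma coup_zero_col:
  assumes "L \<in> couplings p q" "q y = 0" shows "L x y = 0"
proof -
  have nn: "\<forall>x y. 0 \<le> L x y" and cs: "(\<Sum>x\<in>UNIV. L x y) = q y"
    using assms(1) unfolding couplings_def by auto
  then have "(\<Sum>x\<in>UNIV. L x y) = 0" using assms(2) by simp
  then show ?thesis using nn by (simp add: sum_nonneg_eq_0_iff)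
qed

lemma coup_zero_row:
  assumes "L \<in> couplings p q" "p x = 0" shows "L x y = 0"
proof -
  have nn: "\<forall>x y. 0 \<le> L x y" and cs: "(\<Sum>y\<in>UNIV. L x y) = p x"
    using assms(1) unfolding couplings_def by auto
  then have "(\<Sum>y\<in>UNIV. L x y) = 0" using assms(2) by simp
  then show ?thesis using nn by (simp add: sum_nonneg_eq_0_iff)
qed

lemma coup_col_div:
  assumes "L \<in> couplings p q" shows "q y / q y * L x y = L x y"
  using coup_zero_col[OF assms, of y x] by (cases "q y = 0") auto

lemma coup_row_div:
  assumes "L \<in> couplings p q" shows "p x / p x * L x y = L x y"
  using coup_zero_row[OF assms, of x y] by (cases "p x = 0") auto


lemma aux_sum:
  fixes a b c d :: real and L :: "'s::finite \<Rightarrow> real"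
  shows "(\<Sum>w\<in>UNIV. a * b * L w / (c * d)) = a / c * ((\<Sum>w\<in>UNIV. L w) / d * b)"
proof -
  have "(\<Sum>w\<in>UNIV. a * b * L w / (c * d)) = (\<Sum>w\<in>UNIV. (a / c * b / d) * L w)"
    by (rule sum.cong) (auto simp: field_simps)
  also have "\<dots> = (a / c * b / d) * (\<Sum>w\<in>UNIV. L w)" by (rule sum_distrib_left[symmetric])
  finally show ?thesis by (simp add: field_simps)
qed

lemma glue:
  fixes L1 L2 L3 :: "'s::finite \<Rightarrow> 's \<Rightarrow> real"
  assumes c1: "L1 \<in> couplings p1 q" and c2: "L2 \<in> couplings p q" and c3: "L3 \<in> couplings p q2"
  defines "M \<equiv> \<lambda>x w. \<Sum>y\<in>UNIV. \<Sum>z\<in>UNIV. L1 x y * L2 z y * L3 z w / (q y * p z)"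
  shows "M \<in> couplings p1 q2"
proof -
  have n1: "\<forall>x y. 0 \<le> L1 x y" and r1: "\<forall>x. (\<Sum>y\<in>UNIV. L1 x y) = p1 x" and k1: "\<forall>y. (\<Sum>x\<in>UNIV. L1 x y) = q y"
    using c1 unfolding couplings_def by auto
  have n2: "\<forall>x y. 0 \<le> L2 x y" and r2: "\<forall>x. (\<Sum>y\<in>UNIV. L2 x y) = p x" and k2: "\<forall>y. (\<Sum>x\<in>UNIV. L2 x y) = q y"
    using c2 unfolding couplings_def by auto
  have n3: "\<forall>x y. 0 \<le> L3 x y" and r3: "\<forall>x. (\<Sum>y\<in>UNIV. L3 x y) = p x" and k3: "\<forall>y. (\<Sum>x\<in>UNIV. L3 x y) = q2 y"
    using c3 unfolding couplings_def by auto
  have qn: "0 \<le> q y" for y using k1 n1 by (metis sum_nonneg)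
  have pn: "0 \<le> p y" for y using r2 n2 by (metis sum_nonneg)
  have nn: "0 \<le> M x w" for x w unfolding M_def
    using n1 n2 n3 qn pn by (auto intro!: sum_nonneg divide_nonneg_nonneg mult_nonneg_nonneg)
  have row: "(\<Sum>w\<in>UNIV. M x w) = p1 x" for x
  proof -
    have "(\<Sum>w\<in>UNIV. M x w) = (\<Sum>y\<in>UNIV. \<Sum>z\<in>UNIV. \<Sum>w\<in>UNIV. L1 x y * L2 z y * L3 z w / (q y * p z))"
      unfolding M_def by (subst sum.swap, rule sum.cong[OF refl], rule sum.swap)
    also have "\<dots> = (\<Sum>y\<in>UNIV. \<Sum>z\<in>UNIV. L1 x y / q y * (p z / p z * L2 z y))"
      by (rule sum.cong[OF refl], rule sum.cong[OF refl], subst aux_sum, simp add: r3)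
    also have "\<dots> = (\<Sum>y\<in>UNIV. \<Sum>z\<in>UNIV. L1 x y / q y * L2 z y)"
      by (simp only: coup_row_div[OF c2])
    also have "\<dots> = (\<Sum>y\<in>UNIV. (\<Sum>z\<in>UNIV. L2 z y) / q y * L1 x y)"
      by (rule sum.cong[OF refl]) (simp add: sum_divide_distrib sum_distrib_right, rule sum.cong, simp_all)
    also have "\<dots> = (\<Sum>y\<in>UNIV. q y / q y * L1 x y)"
      by (simp add: k2)
    also have "\<dots> = p1 x" by (simp only: coup_col_div[OF c1] r1)
    finally show ?thesis .
  qed
  have col: "(\<Sum>x\<in>UNIV. M x w) = q2 w" for w
  proof -
    have "(\<Sum>x\<in>UNIV. M x w) = (\<Sum>z\<in>UNIV. \<Sum>y\<in>UNIV. \<Sum>x\<in>UNIV. L3 z w * L2 z y * L1 x y / (p z * q y))"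
    proof -
      have "(\<Sum>x\<in>UNIV. M x w) = (\<Sum>y\<in>UNIV. \<Sum>x\<in>UNIV. \<Sum>z\<in>UNIV. L1 x y * L2 z y * L3 z w / (q y * p z))"
        unfolding M_def by (rule sum.swap)
      also have "\<dots> = (\<Sum>y\<in>UNIV. \<Sum>z\<in>UNIV. \<Sum>x\<in>UNIV. L1 x y * L2 z y * L3 z w / (q y * p z))"
        by (rule sum.cong[OF refl], rule sum.swap)
      also have "\<dots> = (\<Sum>z\<in>UNIV. \<Sum>y\<in>UNIV. \<Sum>x\<in>UNIV. L1 x y * L2 z y * L3 z w / (q y * p z))"
        by (rule sum.swap)
      finally show ?thesis by (simp add: ac_simps)
    qed
    also have "\<dots> = (\<Sum>z\<in>UNIV. \<Sum>y\<in>UNIV. L3 z w / p z * (q y / q y * L2 z y))"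
      by (rule sum.cong[OF refl], rule sum.cong[OF refl], subst aux_sum, simp add: k1)
    also have "\<dots> = (\<Sum>z\<in>UNIV. \<Sum>y\<in>UNIV. L3 z w / p z * L2 z y)"
      by (simp only: coup_col_div[OF c2])
    also have "\<dots> = (\<Sum>z\<in>UNIV. (\<Sum>y\<in>UNIV. L2 z y) / p z * L3 z w)"
      by (rule sum.cong[OF refl]) (simp add: sum_divide_distrib sum_distrib_right, rule sum.cong, simp_all)
    also have "\<dots> = (\<Sum>z\<in>UNIV. p z / p z * L3 z w)"
      by (simp add: r2)
    also have "\<dots> = q2 w" by (simp only: coup_row_div[OF c3] k3)
    finally show ?thesis .
  qed
  show ?thesis unfolding couplings_def using nn row col by auto
qed

lemma sum4:
  fixes A B C :: "'s::finite \<Rightarrow> 's \<Rightarrow> real"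
  shows "(\<Sum>x\<in>UNIV. \<Sum>w\<in>UNIV. \<Sum>y\<in>UNIV. \<Sum>z\<in>UNIV. A x y * B z y * C z w / (q y * p z))
       = (\<Sum>y\<in>UNIV. \<Sum>z\<in>UNIV. (\<Sum>x\<in>UNIV. A x y) * B z y * (\<Sum>w\<in>UNIV. C z w) / (q y * p z))"
proof -
  have "(\<Sum>x\<in>UNIV. \<Sum>w\<in>UNIV. \<Sum>y\<in>UNIV. \<Sum>z\<in>UNIV. A x y * B z y * C z w / (q y * p z))
      = (\<Sum>x\<in>UNIV. \<Sum>y\<in>UNIV. \<Sum>w\<in>UNIV. \<Sum>z\<in>UNIV. A x y * B z y * C z w / (q y * p z))"
    by (rule sum.cong[OF refl], rule sum.swap)
  also have "\<dots> = (\<Sum>x\<in>UNIV. \<Sum>y\<in>UNIV. \<Sum>z\<in>UNIV. \<Sum>w\<in>UNIV. A x y * B z y * C z w / (q y * p z))"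
    by (rule sum.cong[OF refl], rule sum.cong[OF refl], rule sum.swap)
  also have "\<dots> = (\<Sum>y\<in>UNIV. \<Sum>x\<in>UNIV. \<Sum>z\<in>UNIV. \<Sum>w\<in>UNIV. A x y * B z y * C z w / (q y * p z))"
    by (rule sum.swap)
  also have "\<dots> = (\<Sum>y\<in>UNIV. \<Sum>z\<in>UNIV. \<Sum>x\<in>UNIV. \<Sum>w\<in>UNIV. A x y * B z y * C z w / (q y * p z))"
    by (rule sum.cong[OF refl], rule sum.swap)
  also have "\<dots> = (\<Sum>y\<in>UNIV. \<Sum>z\<in>UNIV. (\<Sum>x\<in>UNIV. A x y) * B z y * (\<Sum>w\<in>UNIV. C z w) / (q y * p z))"
  proof (rule sum.cong[OF refl], rule sum.cong[OF refl])
    fix y z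
    have "(\<Sum>x\<in>UNIV. \<Sum>w\<in>UNIV. A x y * B z y * C z w / (q y * p z))
        = (\<Sum>x\<in>UNIV. \<Sum>w\<in>UNIV. (B z y / (q y * p z)) * (A x y * C z w))"
      by (rule sum.cong[OF refl], rule sum.cong[OF refl]) simp
    also have "\<dots> = (\<Sum>x\<in>UNIV. ((B z y / (q y * p z)) * A x y) * (\<Sum>w\<in>UNIV. C z w))"
      by (rule sum.cong[OF refl]) (simp add: sum_distrib_left mult.assoc)
    also have "\<dots> = (\<Sum>x\<in>UNIV. (B z y / (q y * p z)) * A x y) * (\<Sum>w\<in>UNIV. C z w)"
      by (rule sum_distrib_right[symmetric])
    also have "\<dots> = (B z y / (q y * p z)) * ((\<Sum>x\<in>UNIV. A x y) * (\<Sum>w\<in>UNIV. C z w))"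
      by (subst sum_distrib_left[symmetric]) (simp only: mult.assoc)
    finally show "(\<Sum>x\<in>UNIV. \<Sum>w\<in>UNIV. A x y * B z y * C z w / (q y * p z))
        = (\<Sum>x\<in>UNIV. A x y) * B z y * (\<Sum>w\<in>UNIV. C z w) / (q y * p z)" by simp
  qed
  finally show ?thesis .
qed


lemma glue_cost:
  fixes L1 L2 L3 d :: "'s::finite \<Rightarrow> 's \<Rightarrow> real"
  assumes c1: "L1 \<in> couplings p1 q" and c2: "L2 \<in> couplings p q" and c3: "L3 \<in> couplings p q2"
    and four: "\<And>x y z w. d x w \<le> d x y + d z y + d z w"
  shows "(\<Sum>x\<in>UNIV. \<Sum>w\<in>UNIV. (\<Sum>y\<in>UNIV. \<Sum>z\<in>UNIV. L1 x y * L2 z y * L3 z w / (q y * p z)) * d x w)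
     \<le> (\<Sum>x\<in>UNIV. \<Sum>y\<in>UNIV. L1 x y * d x y) + (\<Sum>x\<in>UNIV. \<Sum>y\<in>UNIV. L2 x y * d x y)
       + (\<Sum>x\<in>UNIV. \<Sum>y\<in>UNIV. L3 x y * d x y)"
proof -
  have n1: "\<forall>x y. 0 \<le> L1 x y" and r1: "\<forall>x. (\<Sum>y\<in>UNIV. L1 x y) = p1 x" and k1: "\<forall>y. (\<Sum>x\<in>UNIV. L1 x y) = q y"
    using c1 unfolding couplings_def by auto
  have n2: "\<forall>x y. 0 \<le> L2 x y" and r2: "\<forall>x. (\<Sum>y\<in>UNIV. L2 x y) = p x" and k2: "\<forall>y. (\<Sum>x\<in>UNIV. L2 x y) = q y"
    using c2 unfolding couplings_def by auto
  have n3: "\<forall>x y. 0 \<le> L3 x y" and r3: "\<forall>x. (\<Sum>y\<in>UNIV. L3 x y) = p x" and k3: "\<forall>y. (\<Sum>x\<in>UNIV. L3 x y) = q2 y"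
    using c3 unfolding couplings_def by auto
  have qn: "0 \<le> q y" for y using k1 n1 by (metis sum_nonneg)
  have pn: "0 \<le> p y" for y using r2 n2 by (metis sum_nonneg)
  define S1 where "S1 y = (\<Sum>x\<in>UNIV. L1 x y * d x y)" for y
  define S3 where "S3 z = (\<Sum>w\<in>UNIV. L3 z w * d z w)" for z
  have "(\<Sum>x\<in>UNIV. \<Sum>w\<in>UNIV. (\<Sum>y\<in>UNIV. \<Sum>z\<in>UNIV. L1 x y * L2 z y * L3 z w / (q y * p z)) * d x w)
      = (\<Sum>x\<in>UNIV. \<Sum>w\<in>UNIV. \<Sum>y\<in>UNIV. \<Sum>z\<in>UNIV. L1 x y * L2 z y * L3 z w / (q y * p z) * d x w)"
    by (simp only: sum_distrib_right)
  also have "\<dots> \<le> (\<Sum>x\<in>UNIV. \<Sum>w\<in>UNIV. \<Sum>y\<in>UNIV. \<Sum>z\<in>UNIV.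
        (L1 x y * d x y) * L2 z y * L3 z w / (q y * p z)
      + L1 x y * (L2 z y * d z y) * L3 z w / (q y * p z)
      + L1 x y * L2 z y * (L3 z w * d z w) / (q y * p z))"
  proof (intro sum_mono)
    fix x w y z
    have K: "0 \<le> L1 x y * L2 z y * L3 z w / (q y * p z)"
      using n1 n2 n3 qn pn by (auto intro!: divide_nonneg_nonneg mult_nonneg_nonneg)
    have "L1 x y * L2 z y * L3 z w / (q y * p z) * d x w
       \<le> L1 x y * L2 z y * L3 z w / (q y * p z) * (d x y + d z y + d z w)"
      by (rule mult_left_mono[OF four K])
    also have "\<dots> = (L1 x y * d x y) * L2 z y * L3 z w / (q y * p z)
      + L1 x y * (L2 z y * d z y) * L3 z w / (q y * p z)
      + L1 x y * L2 z y * (L3 z w * d z w) / (q y * p z)"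
      by (simp add: divide_inverse algebra_simps)
    finally show "L1 x y * L2 z y * L3 z w / (q y * p z) * d x w \<le> \<dots>" .
  qed
  also have "\<dots> = (\<Sum>x\<in>UNIV. \<Sum>w\<in>UNIV. \<Sum>y\<in>UNIV. \<Sum>z\<in>UNIV. (L1 x y * d x y) * L2 z y * L3 z w / (q y * p z))
      + (\<Sum>x\<in>UNIV. \<Sum>w\<in>UNIV. \<Sum>y\<in>UNIV. \<Sum>z\<in>UNIV. L1 x y * (L2 z y * d z y) * L3 z w / (q y * p z))
      + (\<Sum>x\<in>UNIV. \<Sum>w\<in>UNIV. \<Sum>y\<in>UNIV. \<Sum>z\<in>UNIV. L1 x y * L2 z y * (L3 z w * d z w) / (q y * p z))"
    by (simp only: sum.distrib)
  also have "\<dots> = (\<Sum>y\<in>UNIV. \<Sum>z\<in>UNIV. S1 y * L2 z y * p z / (q y * p z))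
      + (\<Sum>y\<in>UNIV. \<Sum>z\<in>UNIV. q y * (L2 z y * d z y) * p z / (q y * p z))
      + (\<Sum>y\<in>UNIV. \<Sum>z\<in>UNIV. q y * L2 z y * S3 z / (q y * p z))"
    unfolding S1_def S3_def
    by (simp only: sum4[where A="\<lambda>x y. L1 x y * d x y" and B=L2 and C=L3]
          sum4[where A=L1 and B="\<lambda>z y. L2 z y * d z y" and C=L3]
          sum4[where A=L1 and B=L2 and C="\<lambda>z w. L3 z w * d z w"] k1 r3)
  also have "(\<Sum>y\<in>UNIV. \<Sum>z\<in>UNIV. S1 y * L2 z y * p z / (q y * p z)) = (\<Sum>x\<in>UNIV. \<Sum>y\<in>UNIV. L1 x y * d x y)"
  proof -
    have "(\<Sum>y\<in>UNIV. \<Sum>z\<in>UNIV. S1 y * L2 z y * p z / (q y * p z)) = (\<Sum>y\<in>UNIV. \<Sum>z\<in>UNIV. S1 y / q y * L2 z y)"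
      by (rule sum.cong[OF refl], rule sum.cong[OF refl])
         (use coup_zero_row[OF c2] in \<open>fastforce\<close>)
    also have "\<dots> = (\<Sum>y\<in>UNIV. S1 y / q y * q y)"
      by (rule sum.cong[OF refl]) (simp only: sum_distrib_left[symmetric] k2)
    also have "\<dots> = (\<Sum>y\<in>UNIV. S1 y)"
      by (rule sum.cong[OF refl]) (auto simp: S1_def coup_zero_col[OF c1])
    also have "\<dots> = (\<Sum>x\<in>UNIV. \<Sum>y\<in>UNIV. L1 x y * d x y)"
      unfolding S1_def by (rule sum.swap)
    finally show ?thesis .
  qed
  also have "(\<Sum>y\<in>UNIV. \<Sum>z\<in>UNIV. q y * (L2 z y * d z y) * p z / (q y * p z)) = (\<Sum>x\<in>UNIV. \<Sum>y\<in>UNIV. L2 x y * d x y)"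
  proof -
    have "(\<Sum>y\<in>UNIV. \<Sum>z\<in>UNIV. q y * (L2 z y * d z y) * p z / (q y * p z)) = (\<Sum>y\<in>UNIV. \<Sum>z\<in>UNIV. L2 z y * d z y)"
      by (rule sum.cong[OF refl], rule sum.cong[OF refl])
         (use coup_zero_row[OF c2] coup_zero_col[OF c2] in \<open>fastforce\<close>)
    also have "\<dots> = (\<Sum>x\<in>UNIV. \<Sum>y\<in>UNIV. L2 x y * d x y)"
      by (rule sum.swap)
    finally show ?thesis .
  qed
  also have "(\<Sum>y\<in>UNIV. \<Sum>z\<in>UNIV. q y * L2 z y * S3 z / (q y * p z)) = (\<Sum>x\<in>UNIV. \<Sum>y\<in>UNIV. L3 x y * d x y)"
  proof -
    have "(\<Sum>y\<in>UNIV. \<Sum>z\<in>UNIV. q y * L2 z y * S3 z / (q y * p z)) = (\<Sum>y\<in>UNIV. \<Sum>z\<in>UNIV. S3 z / p z * L2 z y)"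
      by (rule sum.cong[OF refl], rule sum.cong[OF refl])
         (use coup_zero_col[OF c2] in \<open>fastforce\<close>)
    also have "\<dots> = (\<Sum>z\<in>UNIV. \<Sum>y\<in>UNIV. S3 z / p z * L2 z y)"
      by (rule sum.swap)
    also have "\<dots> = (\<Sum>z\<in>UNIV. S3 z / p z * p z)"
      by (rule sum.cong[OF refl]) (simp only: sum_distrib_left[symmetric] r2)
    also have "\<dots> = (\<Sum>z\<in>UNIV. S3 z)"
      by (rule sum.cong[OF refl]) (auto simp: S3_def coup_zero_row[OF c3])
    finally show ?thesis unfolding S3_def .
  qed
  finally show ?thesis .
qed


lemma prod_coupling:
  assumes "is_distribution p" "is_distribution q"
  shows "(\<lambda>x y. p x * q y) \<in> couplings p q"
  using assms unfolding couplings_def is_distribution_def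
  by (auto simp: sum_distrib_left[symmetric] sum_distrib_right[symmetric])

abbreviation cost :: "('s::finite \<Rightarrow> 's \<Rightarrow> real) \<Rightarrow> ('s \<Rightarrow> 's \<Rightarrow> real) \<Rightarrow> real" where
  "cost d L \<equiv> \<Sum>x\<in>UNIV. \<Sum>y\<in>UNIV. L x y * d x y"

lemma cost_nonneg:
  assumes "\<forall>x y. 0 \<le> d x y" "L \<in> couplings p q" shows "0 \<le> cost d L"
  using assms unfolding couplings_def by (auto intro!: sum_nonneg)

lemma W1_le_cost:
  assumes "\<forall>x y. 0 \<le> d x y" "L \<in> couplings p q" shows "W1 p q d \<le> cost d L"
  unfolding W1_def
proof (rule cInf_lower)
  show "cost d L \<in> (\<lambda>\<Lambda>. cost d \<Lambda>) ` couplings p q" using assms(2) by blast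
  show "bdd_below ((\<lambda>\<Lambda>. cost d \<Lambda>) ` couplings p q)"
    using cost_nonneg[OF assms(1)] by (auto intro!: bdd_belowI[where m=0])
qed

lemma W1_nonneg:
  assumes "\<forall>x y. 0 \<le> d x y" "is_distribution p" "is_distribution q" shows "0 \<le> W1 p q d"
  unfolding W1_def
  using prod_coupling[OF assms(2,3)] cost_nonneg[OF assms(1)]
  by (intro cInf_greatest) auto

lemma W1_ge:
  assumes "is_distribution p" "is_distribution q" "\<And>L. L \<in> couplings p q \<Longrightarrow> c \<le> cost d L"
  shows "c \<le> W1 p q d"
  unfolding W1_def
  using prod_coupling[OF assms(1,2)] assms(3)
  by (intro cInf_greatest) auto

lemma W1_four:
  assumes dp1: "is_distribution p1" and dq: "is_distribution q" and dp: "is_distribution p"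
    and dq2: "is_distribution q2"
    and nn: "\<forall>x y. 0 \<le> d x y" and four: "\<And>x y z w. d x w \<le> d x y + d z y + d z w"
  shows "W1 p1 q2 d \<le> W1 p1 q d + W1 p q d + W1 p q2 d"
proof -
  have H: "W1 p1 q2 d \<le> cost d L1 + cost d L2 + cost d L3"
    if c1: "L1 \<in> couplings p1 q" and c2: "L2 \<in> couplings p q" and c3: "L3 \<in> couplings p q2" for L1 L2 L3
  proof -
    have "W1 p1 q2 d \<le> cost d (\<lambda>x w. \<Sum>y\<in>UNIV. \<Sum>z\<in>UNIV. L1 x y * L2 z y * L3 z w / (q y * p z))"
      by (rule W1_le_cost[OF nn glue[OF c1 c2 c3]])
    also have "\<dots> \<le> cost d L1 + cost d L2 + cost d L3"
      by (rule glue_cost[OF c1 c2 c3 four])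
    finally show ?thesis .
  qed
  have H2: "W1 p1 q2 d - cost d L2 - cost d L3 \<le> W1 p1 q d"
    if c2: "L2 \<in> couplings p q" and c3: "L3 \<in> couplings p q2" for L2 L3
    using H[OF _ c2 c3] by (intro W1_ge[OF dp1 dq]) fastforce
  have H3: "W1 p1 q2 d - W1 p1 q d - cost d L3 \<le> W1 p q d"
    if c3: "L3 \<in> couplings p q2" for L3
    using H2[OF _ c3] by (intro W1_ge[OF dp dq]) fastforce
  have "W1 p1 q2 d - W1 p1 q d - W1 p q d \<le> W1 p q2 d"
    using H3 by (intro W1_ge[OF dp dq2]) fastforce
  then show ?thesis by simp
qed

lemma dn_nonneg:
  assumes "0 < \<gamma>" "\<And>s a. is_distribution (P s a)" "\<And>s a. is_distribution (P' s a)"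
  shows "\<forall>x y. 0 \<le> dn \<gamma> P P' R R' n x y"
proof (induction n)
  case 0
  then show ?case by simp
next
  case (Suc n)
  show ?case
  proof (intro allI)
    fix x y
    obtain a :: 'b where True by blast
    have "0 \<le> \<bar>R x a - R' y a\<bar> + \<gamma> * W1 (P x a) (P' y a) (dn \<gamma> P P' R R' n)"
      using W1_nonneg[OF Suc assms(2,3)] assms(1) by simp
    also have "\<dots> \<le> Max (range (\<lambda>a. \<bar>R x a - R' y a\<bar> + \<gamma> * W1 (P x a) (P' y a) (dn \<gamma> P P' R R' n)))"
      by (rule Max_ge) auto
    finally show "0 \<le> dn \<gamma> P P' R R' (Suc n) x y" by simp
  qed
qed

theorem corollary2:
  fixes P P' :: "'s::finite \<Rightarrow> 'a::finite \<Rightarrow> 's \<Rightarrow> real"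
    and R R' :: "'s \<Rightarrow> 'a \<Rightarrow> real"
    and \<gamma> :: real
  assumes "0 < \<gamma>" and "\<gamma> < 1"
    and "\<And>s a. is_distribution (P s a)"
    and "\<And>s a. is_distribution (P' s a)"
  shows "\<forall>si sj sk sl n.
           dn \<gamma> P P' R R' n si sl
             \<le> dn \<gamma> P P' R R' n si sj + dn \<gamma> P P' R R' n sk sj + dn \<gamma> P P' R R' n sk sl"
proof -
  have "\<forall>si sj sk sl. dn \<gamma> P P' R R' n si sl
             \<le> dn \<gamma> P P' R R' n si sj + dn \<gamma> P P' R R' n sk sj + dn \<gamma> P P' R R' n sk sl" for n
  proof (induction n)
    case 0
    then show ?case by simp
  next
    case (Suc n)
    show ?case
    proof (intro allI)
      fix si sj sk sl
      let ?d = "dn \<gamma> P P' R R' n"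
      let ?f = "\<lambda>x y a. \<bar>R x a - R' y a\<bar> + \<gamma> * W1 (P x a) (P' y a) ?d"
      have le: "?f si sl a \<le> ?f si sj a + ?f sk sj a + ?f sk sl a" for a
      proof -
        have w: "W1 (P si a) (P' sl a) ?d \<le> W1 (P si a) (P' sj a) ?d + W1 (P sk a) (P' sj a) ?d + W1 (P sk a) (P' sl a) ?d"
          by (rule W1_four[OF assms(3) assms(4) assms(3) assms(4) dn_nonneg[OF assms(1,3,4)]])
             (use Suc in blast)
        have r: "\<bar>R si a - R' sl a\<bar> \<le> \<bar>R si a - R' sj a\<bar> + \<bar>R sk a - R' sj a\<bar> + \<bar>R sk a - R' sl a\<bar>"
          by linarith
        show ?thesis using w r assms(1) mult_left_mono[OF w, of \<gamma>] by (simp add: algebra_simps)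
      qed
      have "Max (range (?f si sl)) \<le> Max (range (?f si sj)) + Max (range (?f sk sj)) + Max (range (?f sk sl))"
      proof (subst Max_le_iff, simp, simp, intro ballI)
        fix t assume "t \<in> range (?f si sl)"
        then obtain a where t: "t = ?f si sl a" by blast
        have "?f si sj a \<le> Max (range (?f si sj))" "?f sk sj a \<le> Max (range (?f sk sj))"
             "?f sk sl a \<le> Max (range (?f sk sl))" by (auto intro: Max_ge)
        then show "t \<le> Max (range (?f si sj)) + Max (range (?f sk sj)) + Max (range (?f sk sl))"
          using le[of a] t by linarith
      qed
      then show "dn \<gamma> P P' R R' (Suc n) si sl \<le> dn \<gamma> P P' R R' (Suc n) si sj
          + dn \<gamma> P P' R R' (Suc n) sk sj + dn \<gamma> P P' R R' (Suc n) sk sl" by simp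
    qed
  qed
  then show ?thesis by blast
qed

end
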